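(* For every connected graph $H$ with at least two vertices, $m(H)\ge 2^{\lfloor k'(H)/2\rfloor}$, where $k'(H)$ is the edge connectivity of $H$.
   Context: All graphs are finite and simple. The edge connectivity $k'(H)$ is the minimum number of edges whose removal disconnects $H$. For graphs $G_1=(V,E_1)$, $G_2=(V,E_2)$, their symmetric difference is $(V,E_1\oplus E_2)$, where $E_1\oplus E_2$ is the set of edges in exactly one of $E_1,E_2$. A connectivity code for $H=(V,E)$ is a collection of distinct spanning subgraphs $(V,E')$, $E'\subseteq E$, such that the symmetric difference of any two distinct members is a connected graph on $V$; $m(H)$ is the maximum cardinality of a connectivity code for $H$. *)

theory Defs
  imports Main
begin

definition simple_graph :: "'a set \<Rightarrow> 'a set set \<Rightarrow> bool" where
  "simple_graph V E \<longleftrightarrow> finite V \<and> (\<forall>e\<in>E. e \<subseteq> V \<and> card e = 2)"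

definition adj :: "'a set set \<Rightarrow> ('a \<times> 'a) set" where
  "adj E = {(u, v). {u, v} \<in> E}"

definition connected_graph :: "'a set \<Rightarrow> 'a set set \<Rightarrow> bool" where
  "connected_graph V E \<longleftrightarrow> V \<noteq> {} \<and> (\<forall>u\<in>V. \<forall>v\<in>V. (u, v) \<in> (adj E)\<^sup>*)"

definition edge_connectivity :: "'a set \<Rightarrow> 'a set set \<Rightarrow> nat" where
  "edge_connectivity V E =
     (LEAST k. \<exists>S. S \<subseteq> E \<and> card S = k \<and> \<not> connected_graph V (E - S))"

definition sym_diff :: "'b set \<Rightarrow> 'b set \<Rightarrow> 'b set" where
  "sym_diff A B = (A - B) \<union> (B - A)"

text \<open>A connectivity code: a collection of distinct spanning subgraphs (V, E'), E' \<subseteq> E,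
  each represented by its edge set, with pairwise connected symmetric differences.\<close>
definition connectivity_code :: "'a set \<Rightarrow> 'a set set \<Rightarrow> 'a set set set \<Rightarrow> bool" where
  "connectivity_code V E C \<longleftrightarrow>
     (\<forall>F\<in>C. F \<subseteq> E) \<and>
     (\<forall>F1\<in>C. \<forall>F2\<in>C. F1 \<noteq> F2 \<longrightarrow> connected_graph V (sym_diff F1 F2))"

definition max_code :: "'a set \<Rightarrow> 'a set set \<Rightarrow> nat" where
  "max_code V E = Max {card C | C. connectivity_code V E C}"

end

theory Submission
  imports Defs
begin

definition Rel :: "('e \<Rightarrow> 'v) \<Rightarrow> ('e \<Rightarrow> 'v) \<Rightarrow> 'e set \<Rightarrow> ('v \<times> 'v) set" where
  "Rel s t A = {(s e, t e) | e. e \<in> A} \<union> {(t e, s e) | e. e \<in> A}"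

definition conn :: "('e \<Rightarrow> 'v) \<Rightarrow> ('e \<Rightarrow> 'v) \<Rightarrow> 'e set \<Rightarrow> 'v \<Rightarrow> 'v \<Rightarrow> bool" where
  "conn s t A x y \<longleftrightarrow> (x, y) \<in> (Rel s t A)\<^sup>*"

lemma conn_refl[simp]: "conn s t A x x"
  by (simp add: conn_def)

lemma conn_trans: "conn s t A x y \<Longrightarrow> conn s t A y z \<Longrightarrow> conn s t A x z"
  unfolding conn_def by (rule rtrancl_trans)

lemma conn_sym: "conn s t A x y \<Longrightarrow> conn s t A y x"
  unfolding conn_def
proof (induction rule: rtrancl_induct)
  case base thus ?case by simp
next
  case (step y z)
  have "(z, y) \<in> Rel s t A" using step(2) unfolding Rel_def by blast
  thus ?case using step(3) by (rule converse_rtrancl_into_rtrancl)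
qed

lemma conn_edge: "e \<in> A \<Longrightarrow> conn s t A (s e) (t e)"
  unfolding conn_def Rel_def by blast

lemma conn_edge': "e \<in> A \<Longrightarrow> conn s t A (t e) (s e)"
  using conn_edge conn_sym by metis

lemma conn_mono: "A \<subseteq> B \<Longrightarrow> conn s t A x y \<Longrightarrow> conn s t B x y"
proof -
  assume "A \<subseteq> B"
  hence "Rel s t A \<subseteq> Rel s t B" unfolding Rel_def by blast
  thus "conn s t A x y \<Longrightarrow> conn s t B x y" unfolding conn_def using rtrancl_mono by blast
qed

lemma conn_step_cases:
  assumes "(y, z) \<in> Rel s t A"
  obtains e where "e \<in> A" "y = s e" "z = t e" | e where "e \<in> A" "y = t e" "z = s e"
  using assms unfolding Rel_def by blast

lemma conn_sub:
  assumes "conn s t A x y" and "\<And>e. e \<in> A \<Longrightarrow> conn s' t' B (s e) (t e)"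
  shows "conn s' t' B x y"
  using assms(1) unfolding conn_def[of s t]
proof (induction rule: rtrancl_induct)
  case base thus ?case by simp
next
  case (step y z)
  from step(2) have "conn s' t' B y z"
  proof (rule conn_step_cases)
    fix e assume "e \<in> A" "y = s e" "z = t e" thus ?thesis using assms(2)[of e] by simp
  next
    fix e assume "e \<in> A" "y = t e" "z = s e" thus ?thesis using assms(2)[of e] conn_sym by simp
  qed
  thus ?case using step(3) conn_trans by metis
qed

lemma conn_insert:
  "conn s t (insert e A) x y \<longleftrightarrow> conn s t A x y \<or> (conn s t A x (s e) \<and> conn s t A (t e) y)
     \<or> (conn s t A x (t e) \<and> conn s t A (s e) y)"
proof
  assume "conn s t (insert e A) x y"
  thus "conn s t A x y \<or> (conn s t A x (s e) \<and> conn s t A (t e) y)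
     \<or> (conn s t A x (t e) \<and> conn s t A (s e) y)"
    unfolding conn_def[of s t "insert e A"]
  proof (induction rule: rtrancl_induct)
    case base thus ?case by simp
  next
    case (step y z)
    from step(2) have "conn s t A y z \<or> (y = s e \<and> z = t e) \<or> (y = t e \<and> z = s e)"
      by (rule conn_step_cases) (auto intro: conn_edge conn_edge')
    thus ?case using step(3) by (meson conn_trans conn_refl)
  qed
next
  assume "conn s t A x y \<or> (conn s t A x (s e) \<and> conn s t A (t e) y)
     \<or> (conn s t A x (t e) \<and> conn s t A (s e) y)"
  moreover have "conn s t (insert e A) (s e) (t e)" by (rule conn_edge) simp
  moreover have "\<And>a b. conn s t A a b \<Longrightarrow> conn s t (insert e A) a b"
    by (erule conn_mono[rotated]) blast
  ultimately show "conn s t (insert e A) x y" by (meson conn_trans conn_sym)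
qed

lemma conn_insert_same:
  assumes "conn s t A (s e) (t e)"
  shows "conn s t (insert e A) x y \<longleftrightarrow> conn s t A x y"
  using assms by (simp add: conn_insert) (meson conn_trans conn_sym)

lemma conn_restrict:
  assumes "conn s t A x y" "x \<in> W" "\<And>e. e \<in> A \<Longrightarrow> s e \<in> W \<longleftrightarrow> t e \<in> W"
  shows "conn s t {e \<in> A. s e \<in> W \<and> t e \<in> W} x y \<and> y \<in> W"
  using assms(1) unfolding conn_def[of s t A]
proof (induction rule: rtrancl_induct)
  case base thus ?case using assms(2) by simp
next
  case (step y z)
  from step(2) show ?case
  proof (rule conn_step_cases)
    fix e assume "e \<in> A" "y = s e" "z = t e"
    thus ?thesis using step(3) assms(3)[of e] conn_edge[of e "{e \<in> A. s e \<in> W \<and> t e \<in> W}" s t]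
      by (auto intro: conn_trans)
  next
    fix e assume "e \<in> A" "y = t e" "z = s e"
    thus ?thesis using step(3) assms(3)[of e] conn_edge'[of e "{e \<in> A. s e \<in> W \<and> t e \<in> W}" s t]
      by (auto intro: conn_trans)
  qed
qed

definition forest :: "('e \<Rightarrow> 'v) \<Rightarrow> ('e \<Rightarrow> 'v) \<Rightarrow> 'e set \<Rightarrow> bool" where
  "forest s t F \<longleftrightarrow> (\<forall>e\<in>F. \<not> conn s t (F - {e}) (s e) (t e))"

lemma forest_mono: "forest s t F \<Longrightarrow> G \<subseteq> F \<Longrightarrow> forest s t G"
  unfolding forest_def by (meson Diff_mono conn_mono order_refl subsetD)

lemma forest_noloop: "forest s t F \<Longrightarrow> e \<in> F \<Longrightarrow> s e \<noteq> t e"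
  unfolding forest_def by fastforce

lemma forest_insert:
  assumes "forest s t F" "\<not> conn s t F (s e) (t e)"
  shows "forest s t (insert e F)"
  unfolding forest_def
proof
  fix e' assume e': "e' \<in> insert e F"
  show "\<not> conn s t (insert e F - {e'}) (s e') (t e')"
  proof (cases "e' = e")
    case True
    have "insert e F - {e'} \<subseteq> F" using True by blast
    thus ?thesis using assms(2) True conn_mono by metis
  next
    case False
    hence eF: "e' \<in> F" using e' by blast
    have eq: "insert e F - {e'} = insert e (F - {e'})" using False by blast
    have nc: "\<not> conn s t (F - {e'}) (s e') (t e')" using assms(1) eF unfolding forest_def by blast
    have m: "\<And>a b. conn s t (F - {e'}) a b \<Longrightarrow> conn s t F a b" by (erule conn_mono[rotated]) blast
    have ed: "conn s t F (s e') (t e')" using eF by (rule conn_edge)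
    show ?thesis
    proof
      assume "conn s t (insert e F - {e'}) (s e') (t e')"
      hence "conn s t (F - {e'}) (s e') (s e) \<and> conn s t (F - {e'}) (t e) (t e')
           \<or> conn s t (F - {e'}) (s e') (t e) \<and> conn s t (F - {e'}) (s e) (t e')"
        using nc unfolding eq conn_insert by blast
      hence "conn s t F (s e) (t e)" using m ed by (meson conn_sym conn_trans)
      thus False using assms(2) by blast
    qed
  qed
qed

lemma forest_exchange:
  assumes "forest s t F" "e' \<in> F" "\<not> conn s t (F - {e'}) (s e) (t e)"
  shows "forest s t (insert e F - {e'})"
proof -
  have "forest s t (insert e (F - {e'}))"
  proof (rule forest_insert)
    show "forest s t (F - {e'})" using assms(1) by (rule forest_mono) blast
  qed (use assms(3) in blast)
  moreover have "insert e F - {e'} \<subseteq> insert e (F - {e'})" by blast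
  ultimately show ?thesis using forest_mono by blast
qed

lemma forest_path:
  assumes "forest s t F" "finite A" "A \<subseteq> F" "conn s t A x y"
  shows "conn s t {e \<in> A. \<not> conn s t (F - {e}) x y} x y"
  using assms(2-4)
proof (induction "card A" arbitrary: A rule: less_induct)
  case less
  show ?case
  proof (cases "\<forall>e\<in>A. \<not> conn s t (F - {e}) x y")
    case True
    hence "{e \<in> A. \<not> conn s t (F - {e}) x y} = A" by blast
    thus ?thesis using less by simp
  next
    case False
    then obtain e where e: "e \<in> A" "conn s t (F - {e}) x y" by blast
    have "conn s t (A - {e}) x y"
    proof (rule ccontr)
      assume nc: "\<not> conn s t (A - {e}) x y"
      have "conn s t (insert e (A - {e})) x y" using less(4) e(1) by (simp add: insert_absorb)
      hence c: "conn s t (A - {e}) x (s e) \<and> conn s t (A - {e}) (t e) y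
           \<or> conn s t (A - {e}) x (t e) \<and> conn s t (A - {e}) (s e) y"
        using nc unfolding conn_insert by blast
      have m: "\<And>a b. conn s t (A - {e}) a b \<Longrightarrow> conn s t (F - {e}) a b"
        by (erule conn_mono[rotated]) (use less(3) in blast)
      have "conn s t (F - {e}) (s e) (t e)" using c m e(2) by (meson conn_sym conn_trans)
      thus False using assms(1) e(1) less(3) unfolding forest_def by blast
    qed
    hence "conn s t {e' \<in> A - {e}. \<not> conn s t (F - {e'}) x y} x y"
      using less(2,3) e(1) by (intro less(1)[of "A - {e}"] card_Diff1_less[OF less(2) e(1)]) auto
    thus ?thesis by (rule conn_mono[rotated]) blast
  qed
qed

definition cl :: "('e \<Rightarrow> 'v) \<Rightarrow> ('e \<Rightarrow> 'v) \<Rightarrow> 'v set \<Rightarrow> 'e set \<Rightarrow> 'v \<Rightarrow> 'v set" where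
  "cl s t V F v = {w \<in> V. conn s t F v w}"

lemma cl_eq: "conn s t F v a \<Longrightarrow> cl s t V F v = cl s t V F a"
  unfolding cl_def using conn_trans conn_sym by metis

lemma conn_empty: "conn s t {} v w \<longleftrightarrow> v = w"
  unfolding conn_def Rel_def by simp

lemma forest_card:
  assumes "finite V" "finite F" "\<forall>e\<in>F. s e \<in> V \<and> t e \<in> V" "forest s t F"
  shows "card F + card (cl s t V F ` V) = card V"
  using assms(2,3,4)
proof (induction F rule: finite_induct)
  case empty
  have "cl s t V {} ` V = (\<lambda>v. {v}) ` V"
    by (rule image_cong) (auto simp: cl_def conn_empty)
  moreover have "card ((\<lambda>v. {v}) ` V) = card V" by (rule card_image) (auto simp: inj_on_def)
  ultimately show ?case by simp
next
  case (insert e F)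
  have fF: "forest s t F" using insert(5) by (rule forest_mono) blast
  have nab: "\<not> conn s t F (s e) (t e)"
    using insert(5) insert(2) unfolding forest_def by auto
  have IH: "card F + card (cl s t V F ` V) = card V" using insert fF by auto
  define a where "a = s e"
  define b where "b = t e"
  have aV: "a \<in> V" and bV: "b \<in> V" using insert(4) by (auto simp: a_def b_def)
  have nab': "\<not> conn s t F a b" using nab by (simp add: a_def b_def)
  let ?S = "cl s t V F ` V"
  let ?A = "cl s t V F a"
  let ?B = "cl s t V F b"
  have ci: "\<And>v w. conn s t (insert e F) v w \<longleftrightarrow> conn s t F v w \<or> (conn s t F v a \<and> conn s t F b w)
     \<or> (conn s t F v b \<and> conn s t F a w)" by (simp add: conn_insert a_def b_def)
  have c1: "cl s t V (insert e F) v = ?A \<union> ?B" if "v \<in> V" "conn s t F v a \<or> conn s t F v b" for v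
  proof -
    have E: "conn s t F x y \<longleftrightarrow> conn s t F x' y" if "conn s t F x x'" for x x' y
      using that conn_trans conn_sym by metis
    have E2: "conn s t F v a \<longleftrightarrow> \<not> conn s t F v b"
      using that(2) nab' conn_trans conn_sym by metis
    show ?thesis unfolding cl_def ci
    proof (cases "conn s t F v a")
      case True
      thus "{w \<in> V. conn s t F v w \<or> conn s t F v a \<and> conn s t F b w \<or> conn s t F v b \<and> conn s t F a w} =
         {w \<in> V. conn s t F a w} \<union> {w \<in> V. conn s t F b w}" using E[OF True] E2 by blast
    next
      case False
      hence vb: "conn s t F v b" using E2 by blast
      thus "{w \<in> V. conn s t F v w \<or> conn s t F v a \<and> conn s t F b w \<or> conn s t F v b \<and> conn s t F a w} =
         {w \<in> V. conn s t F a w} \<union> {w \<in> V. conn s t F b w}" using E[OF vb] False by blast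
    qed
  qed
  have c2: "cl s t V (insert e F) v = cl s t V F v" if "v \<in> V" "\<not> conn s t F v a" "\<not> conn s t F v b" for v
    using that unfolding cl_def ci by blast
  have AS: "?A \<in> ?S" using aV by (rule imageI)
  have BS: "?B \<in> ?S" using bV by (rule imageI)
  have bB: "b \<in> ?B" using bV by (simp add: cl_def)
  have bA: "b \<notin> ?A" using nab' by (simp add: cl_def)
  have AB: "?A \<noteq> ?B" using bB bA by blast
  have inA: "conn s t F v a" if "v \<in> V" "cl s t V F v = ?A" for v
  proof -
    have "v \<in> cl s t V F v" using that(1) by (simp add: cl_def)
    hence "v \<in> cl s t V F a" using that(2) by simp
    hence "conn s t F a v" by (simp add: cl_def)
    thus ?thesis by (rule conn_sym)
  qed
  have inB: "conn s t F v b" if "v \<in> V" "cl s t V F v = ?B" for v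
  proof -
    have "v \<in> cl s t V F v" using that(1) by (simp add: cl_def)
    hence "v \<in> cl s t V F b" using that(2) by simp
    hence "conn s t F b v" by (simp add: cl_def)
    thus ?thesis by (rule conn_sym)
  qed
  have img: "cl s t V (insert e F) ` V = insert (?A \<union> ?B) (?S - {?A, ?B})"
  proof (rule set_eqI, rule iffI)
    fix X assume "X \<in> cl s t V (insert e F) ` V"
    then obtain v where v: "v \<in> V" "X = cl s t V (insert e F) v" by blast
    show "X \<in> insert (?A \<union> ?B) (?S - {?A, ?B})"
    proof (cases "conn s t F v a \<or> conn s t F v b")
      case True thus ?thesis using c1 v by auto
    next
      case False
      hence "X = cl s t V F v" using c2 v by auto
      moreover have "cl s t V F v \<noteq> ?A" "cl s t V F v \<noteq> ?B" using inA inB False v(1) by blast+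
      ultimately show ?thesis using v(1) by blast
    qed
  next
    fix X assume X: "X \<in> insert (?A \<union> ?B) (?S - {?A, ?B})"
    show "X \<in> cl s t V (insert e F) ` V"
    proof (cases "X = ?A \<union> ?B")
      case True thus ?thesis using c1[of a] aV by (metis conn_refl image_eqI)
    next
      case False
      then obtain v where v: "v \<in> V" "X = cl s t V F v" "X \<noteq> ?A" "X \<noteq> ?B" using X by blast
      have "\<not> conn s t F v a" "\<not> conn s t F v b" using v cl_eq by metis+
      thus ?thesis using c2 v by (metis image_eqI)
    qed
  qed
  have notin: "?A \<union> ?B \<notin> ?S - {?A, ?B}"
  proof
    assume "?A \<union> ?B \<in> ?S - {?A, ?B}"
    then obtain v where v: "v \<in> V" "?A \<union> ?B = cl s t V F v" "cl s t V F v \<noteq> ?A" by blast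
    have "a \<in> ?A" using aV unfolding cl_def by simp
    hence "a \<in> cl s t V F v" using v(2) by blast
    hence "conn s t F v a" by (simp add: cl_def)
    thus False using cl_eq[of s t F v a V] v(3) by simp
  qed
  have fS: "finite ?S" using assms(1) by simp
  have "card (cl s t V (insert e F) ` V) = card (?S - {?A, ?B}) + 1"
    using img notin fS by simp
  moreover have "card (?S - {?A, ?B}) = card ?S - 2" using AS BS AB fS
    by (simp add: card_Diff_subset)
  moreover have "card ?S \<ge> 2"
  proof -
    have "card {?A, ?B} = 2" using AB by simp
    moreover have "{?A, ?B} \<subseteq> ?S" using AS BS by blast
    ultimately show ?thesis using card_mono[OF fS] by metis
  qed
  ultimately show ?case using IH insert(1,2) by simp
qed

lemma forest_card_le:
  assumes "finite V" "finite F" "\<forall>e\<in>F. s e \<in> V \<and> t e \<in> V" "forest s t F"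
    "x \<in> V" "y \<in> V" "\<not> conn s t F x y"
  shows "card F + 2 \<le> card V"
proof -
  have "y \<in> cl s t V F y" "y \<notin> cl s t V F x" using assms(6,7) by (simp_all add: cl_def)
  hence "cl s t V F x \<noteq> cl s t V F y" by blast
  hence "card {cl s t V F x, cl s t V F y} = 2" by simp
  moreover have "{cl s t V F x, cl s t V F y} \<subseteq> cl s t V F ` V" using assms(5,6) by auto
  moreover have "finite (cl s t V F ` V)" using assms(1) by simp
  ultimately have "2 \<le> card (cl s t V F ` V)" using card_mono by metis
  thus ?thesis using forest_card[OF assms(1-4)] by linarith
qed

lemma forest_card_le1:
  assumes "finite V" "finite F" "\<forall>e\<in>F. s e \<in> V \<and> t e \<in> V" "forest s t F" "x \<in> V"
  shows "card F + 1 \<le> card V"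
proof -
  have "cl s t V F ` V \<noteq> {}" using assms(5) by blast
  hence "1 \<le> card (cl s t V F ` V)" using assms(1) by (simp add: Suc_leI card_gt_0_iff)
  thus ?thesis using forest_card[OF assms(1-4)] by linarith
qed

definition fvalid :: "'e set \<Rightarrow> ('e \<Rightarrow> 'v) \<Rightarrow> ('e \<Rightarrow> 'v) \<Rightarrow> nat \<Rightarrow> (nat \<Rightarrow> 'e set) \<Rightarrow> bool" where
  "fvalid I s t k F \<longleftrightarrow> (\<forall>i<k. F i \<subseteq> I \<and> forest s t (F i)) \<and> (\<forall>i<k. \<forall>j<k. i \<noteq> j \<longrightarrow> F i \<inter> F j = {})"

definition ftotal :: "nat \<Rightarrow> (nat \<Rightarrow> 'e set) \<Rightarrow> nat" where
  "ftotal k F = (\<Sum>i<k. card (F i))"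

lemma ftotal_upd:
  assumes "i < k"
  shows "ftotal k (F(i := X)) + card (F i) = ftotal k F + card X"
proof -
  have "ftotal k (F(i := X)) = card X + (\<Sum>j\<in>{..<k}-{i}. card ((F(i := X)) j))"
    unfolding ftotal_def using assms by (simp add: sum.remove[of "{..<k}" i])
  also have "(\<Sum>j\<in>{..<k}-{i}. card ((F(i := X)) j)) = (\<Sum>j\<in>{..<k}-{i}. card (F j))"
    by (rule sum.cong) auto
  finally have 1: "ftotal k (F(i := X)) = card X + (\<Sum>j\<in>{..<k}-{i}. card (F j))" .
  have 2: "ftotal k F = card (F i) + (\<Sum>j\<in>{..<k}-{i}. card (F j))"
    unfolding ftotal_def using assms by (simp add: sum.remove[of "{..<k}" i])
  show ?thesis using 1 2 by simp
qed

locale maxfam =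
  fixes V :: "'v set" and I :: "'e set" and s t :: "'e \<Rightarrow> 'v" and k :: nat and F :: "nat \<Rightarrow> 'e set"
  assumes finV: "finite V" and finI: "finite I" and ends: "\<forall>e\<in>I. s e \<in> V \<and> t e \<in> V"
    and validF: "fvalid I s t k F"
    and maxF: "\<And>G. fvalid I s t k G \<Longrightarrow> ftotal k G \<le> ftotal k F"
begin

definition step :: "(nat \<Rightarrow> 'e set) \<Rightarrow> (nat \<Rightarrow> 'e set) \<Rightarrow> bool" where
  "step G H \<longleftrightarrow> (\<exists>j<k. \<exists>e e'. e \<in> I \<and> (\<forall>i<k. e \<notin> G i) \<and> e' \<in> G j \<and>
      forest s t (insert e (G j) - {e'}) \<and> H = G(j := insert e (G j) - {e'}))"

definition cls :: "(nat \<Rightarrow> 'e set) set" where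
  "cls = {G. (F, G) \<in> {(X, Y). step X Y}\<^sup>*}"

definition E0 :: "'e set" where
  "E0 = {e \<in> I. \<exists>G\<in>cls. \<forall>i<k. e \<notin> G i}"

lemma F_cls: "F \<in> cls" unfolding cls_def by simp

lemma cls_step: "G \<in> cls \<Longrightarrow> step G H \<Longrightarrow> H \<in> cls"
  unfolding cls_def by (auto intro: rtrancl_into_rtrancl)

lemma step_valid:
  assumes "fvalid I s t k G" "j < k" "e \<in> I" "\<forall>i<k. e \<notin> G i" "e' \<in> G j"
    "forest s t (insert e (G j) - {e'})"
  shows "fvalid I s t k (G(j := insert e (G j) - {e'})) \<and> ftotal k (G(j := insert e (G j) - {e'})) = ftotal k G"
proof
  let ?X = "insert e (G j) - {e'}"
  have Gj: "G j \<subseteq> I" "forest s t (G j)" using assms(1,2) unfolding fvalid_def by auto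
  have disj: "\<And>i i'. i < k \<Longrightarrow> i' < k \<Longrightarrow> i \<noteq> i' \<Longrightarrow> G i \<inter> G i' = {}"
    using assms(1) unfolding fvalid_def by blast
  show "fvalid I s t k (G(j := ?X))"
    unfolding fvalid_def
  proof (intro conjI allI impI)
    fix i assume i: "i < k"
    show "(G(j := ?X)) i \<subseteq> I"
      using Gj assms(1,3,6) i unfolding fvalid_def by auto
  next
    fix i assume i: "i < k"
    show "forest s t ((G(j := ?X)) i)"
      using Gj assms(1,3,6) i unfolding fvalid_def by auto
  next
    fix i i' assume i: "i < k" "i' < k" "i \<noteq> i'"
    show "(G(j := ?X)) i \<inter> (G(j := ?X)) i' = {}"
    proof (cases "i = j")
      case True
      hence "i' \<noteq> j" using i by blast
      thus ?thesis using True disj[of j i'] assms(4) i by auto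
    next
      case False
      show ?thesis
      proof (cases "i' = j")
        case True thus ?thesis using False disj[of i j] assms(4) i by auto
      next
        case False2: False
        thus ?thesis using False disj[of i i'] i by auto
      qed
    qed
  qed
  have fin: "finite (G j)" using Gj(1) finI finite_subset by blast
  have "e \<notin> G j" using assms(2,4) by blast
  hence "e \<noteq> e'" using assms(5) by blast
  hence "?X = insert e (G j - {e'})" by blast
  hence "card ?X = card (G j)"
    using fin \<open>e \<notin> G j\<close> assms(5) by (simp add: card_Diff1_less) (metis Suc_pred card_gt_0_iff empty_iff)
  thus "ftotal k (G(j := ?X)) = ftotal k G" using ftotal_upd[OF assms(2), of G ?X] by simp
qed

lemma cls_valid: assumes "G \<in> cls" shows "fvalid I s t k G \<and> ftotal k G = ftotal k F"
proof -
  have "(F, G) \<in> {(X, Y). step X Y}\<^sup>*" using assms unfolding cls_def by simp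
  thus ?thesis
  proof (induction rule: rtrancl_induct)
    case base thus ?case using validF by simp
  next
    case (step G H)
    from step(2) have "step G H" by simp
    then obtain j e e' where j: "j < k" "e \<in> I" "\<forall>i<k. e \<notin> G i" "e' \<in> G j"
      "forest s t (insert e (G j) - {e'})" and Heq: "H = G(j := insert e (G j) - {e'})"
      unfolding step_def by blast
    have "fvalid I s t k H \<and> ftotal k H = ftotal k G"
      unfolding Heq using step(3) j by (intro step_valid) auto
    thus ?case using step(3) by simp
  qed
qed

lemma uncovered_E0: "G \<in> cls \<Longrightarrow> e \<in> I \<Longrightarrow> \<forall>i<k. e \<notin> G i \<Longrightarrow> e \<in> E0"
  unfolding E0_def by blast

lemma exch:
  assumes "G \<in> cls" "j < k" "e \<in> I" "\<forall>i<k. e \<notin> G i" "e' \<in> G j"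
    "forest s t (insert e (G j) - {e'})"
  shows "G(j := insert e (G j) - {e'}) \<in> cls" "e' \<in> E0" "e \<in> E0"
proof -
  have "step G (G(j := insert e (G j) - {e'}))"
    unfolding step_def
    apply (rule exI[where x=j], rule conjI[OF assms(2)])
    apply (rule exI[where x=e], rule exI[where x=e'])
    using assms(3-6) by simp
  thus H: "G(j := insert e (G j) - {e'}) \<in> cls" by (rule cls_step[OF assms(1)])
  have vG: "fvalid I s t k G" using cls_valid assms(1) by blast
  have "e' \<in> I" using vG assms(2,5) unfolding fvalid_def by blast
  moreover have "\<forall>i<k. e' \<notin> (G(j := insert e (G j) - {e'})) i"
  proof (intro allI impI)
    fix i assume "i < k"
    show "e' \<notin> (G(j := insert e (G j) - {e'})) i"
    proof (cases "i = j")
      case False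
      hence "G i \<inter> G j = {}" using vG \<open>i<k\<close> assms(2) unfolding fvalid_def by blast
      thus ?thesis using False assms(5) by auto
    qed simp
  qed
  ultimately show "e' \<in> E0" using uncovered_E0[OF H] by blast
  show "e \<in> E0" using uncovered_E0[OF assms(1,3,4)] .
qed

lemma key1:
  assumes "G \<in> cls" "e \<in> I" "\<forall>i<k. e \<notin> G i" "i < k"
  shows "conn s t (G i \<inter> E0) (s e) (t e)"
proof -
  have vG: "fvalid I s t k G" and tG: "ftotal k G = ftotal k F" using cls_valid assms(1) by auto
  have Gi: "G i \<subseteq> I" "forest s t (G i)" using vG assms(4) unfolding fvalid_def by auto
  have c: "conn s t (G i) (s e) (t e)"
  proof (rule ccontr)
    assume nc: "\<not> conn s t (G i) (s e) (t e)"
    let ?H = "G(i := insert e (G i))"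
    have "fvalid I s t k ?H"
      unfolding fvalid_def
    proof (intro conjI allI impI)
      fix j assume "j < k"
      show "?H j \<subseteq> I"
        using vG \<open>j<k\<close> Gi assms(2) unfolding fvalid_def by auto
    next
      fix j assume "j < k"
      show "forest s t (?H j)"
        using vG \<open>j<k\<close> forest_insert[OF Gi(2) nc] unfolding fvalid_def by auto
    next
      fix j j' assume jj: "j < k" "j' < k" "j \<noteq> j'"
      have "G j \<inter> G j' = {}" using vG jj unfolding fvalid_def by blast
      moreover have "e \<notin> G j" "e \<notin> G j'" using assms(3) jj by blast+
      ultimately show "?H j \<inter> ?H j' = {}" using jj(3) by (cases "j = i"; cases "j' = i") auto
    qed
    moreover have "ftotal k ?H + card (G i) = ftotal k G + card (insert e (G i))"
      by (rule ftotal_upd[OF assms(4)])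
    moreover have "finite (G i)" using Gi(1) finI finite_subset by blast
    moreover have "e \<notin> G i" using assms(3,4) by blast
    ultimately have "ftotal k ?H = ftotal k F + 1" using tG by simp
    thus False using maxF[OF \<open>fvalid I s t k ?H\<close>] by simp
  qed
  have fin: "finite (G i)" using Gi(1) finI finite_subset by blast
  have p: "conn s t {e' \<in> G i. \<not> conn s t (G i - {e'}) (s e) (t e)} (s e) (t e)"
    by (rule forest_path[OF Gi(2) fin order_refl c])
  have "{e' \<in> G i. \<not> conn s t (G i - {e'}) (s e) (t e)} \<subseteq> G i \<inter> E0"
  proof
    fix e' assume "e' \<in> {e' \<in> G i. \<not> conn s t (G i - {e'}) (s e) (t e)}"
    hence e': "e' \<in> G i" "\<not> conn s t (G i - {e'}) (s e) (t e)" by auto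
    have "forest s t (insert e (G i) - {e'})" by (rule forest_exchange[OF Gi(2) e'])
    hence "e' \<in> E0" by (rule exch(2)[OF assms(1,4,2,3) e'(1)])
    thus "e' \<in> G i \<inter> E0" using e'(1) by blast
  qed
  thus ?thesis using p by (rule conn_mono)
qed

lemma invar:
  assumes "G \<in> cls" "i < k"
  shows "conn s t (G i \<inter> E0) x y \<longleftrightarrow> conn s t (F i \<inter> E0) x y"
proof -
  have "(F, G) \<in> {(X, Y). step X Y}\<^sup>*" using assms(1) unfolding cls_def by simp
  thus ?thesis
proof (induction arbitrary: x y rule: rtrancl_induct)
  case base thus ?case by simp
next
  case (step G1 G2)
  have G1: "G1 \<in> cls" using step(1) unfolding cls_def by simp
  from step(2) have "step G1 G2" by simp
  then obtain j e e' where j: "j < k" "e \<in> I" "\<forall>i<k. e \<notin> G1 i" "e' \<in> G1 j"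
    "forest s t (insert e (G1 j) - {e'})" and G2: "G2 = G1(j := insert e (G1 j) - {e'})"
    unfolding step_def by auto
  have G2c: "G2 \<in> cls" using exch(1)[OF G1 j] G2 by simp
  have eE: "e \<in> E0" and e'E: "e' \<in> E0" using exch[OF G1 j] by auto
  show ?case
  proof (cases "i = j")
    case False
    thus ?thesis using G2 step(3) by simp
  next
    case True
    let ?A = "G1 j \<inter> E0"
    have e'ne: "e \<noteq> e'" using j(3,1,4) by blast
    have eq: "G2 i \<inter> E0 = insert e ?A - {e'}" using True G2 eE e'ne by auto
    have k1: "conn s t ?A (s e) (t e)" using key1[OF G1 j(2,3,1)] .
    have "e' \<in> I" "\<forall>i<k. e' \<notin> G2 i"
    proof -
      show "e' \<in> I" using e'E unfolding E0_def by blast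
      show "\<forall>i<k. e' \<notin> G2 i"
      proof (intro allI impI)
        fix i' assume "i' < k"
        show "e' \<notin> G2 i'"
        proof (cases "i' = j")
          case False
          hence "G1 i' \<inter> G1 j = {}" using cls_valid[OF G1] \<open>i'<k\<close> j(1) unfolding fvalid_def by blast
          thus ?thesis using False G2 j(4) by auto
        qed (simp add: G2)
      qed
    qed
    hence k2: "conn s t (insert e ?A - {e'}) (s e') (t e')"
      using key1[OF G2c _ _ j(1)] G2 eq True by simp
    have ins: "insert e' (insert e ?A - {e'}) = insert e ?A" using j(4) e'E by blast
    have "conn s t (G2 i \<inter> E0) x y \<longleftrightarrow> conn s t (insert e' (insert e ?A - {e'})) x y"
      unfolding eq using conn_insert_same[OF k2] by simp
    also have "\<dots> \<longleftrightarrow> conn s t (insert e ?A) x y" unfolding ins ..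
    also have "\<dots> \<longleftrightarrow> conn s t ?A x y" using conn_insert_same[OF k1] .
    finally show ?thesis using step(3)[of x y] True by simp
  qed
qed
qed

lemma E0_conn:
  assumes "i < k" "conn s t E0 x y"
  shows "conn s t (F i \<inter> E0) x y"
proof (rule conn_sub[OF assms(2)])
  fix e assume "e \<in> E0"
  then obtain G where G: "G \<in> cls" "e \<in> I" "\<forall>i<k. e \<notin> G i" unfolding E0_def by blast
  show "conn s t (F i \<inter> E0) (s e) (t e)" using key1[OF G assms(1)] invar[OF G(1) assms(1)] by simp
qed

end

definition partcond :: "'v set \<Rightarrow> 'e set \<Rightarrow> ('e \<Rightarrow> 'v) \<Rightarrow> ('e \<Rightarrow> 'v) \<Rightarrow> nat \<Rightarrow> bool" where
  "partcond V I s t k \<longleftrightarrow> (\<forall>f::'v \<Rightarrow> 'v. k * (card (f ` V) - 1) \<le> card {e\<in>I. f (s e) \<noteq> f (t e)})"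

context maxfam begin

lemma find_U:
  assumes pc: "partcond V I s t k" and i0: "i0 < k" and xy: "x0 \<in> V" "y0 \<in> V" "\<not> conn s t (F i0) x0 y0"
  shows "\<exists>U. U \<subseteq> V \<and> 2 \<le> card U \<and> (\<forall>i<k. \<forall>x\<in>U. \<forall>y\<in>U. conn s t {e \<in> F i. s e \<in> U \<and> t e \<in> U} x y)"
proof -
  let ?N = "{e\<in>I. s e \<noteq> t e}"
  have "k * (card (id ` V) - 1) \<le> card {e\<in>I. id (s e) \<noteq> id (t e)}"
    using pc unfolding partcond_def by blast
  hence N: "k * (card V - 1) \<le> card ?N" by simp
  have Fi: "F i \<subseteq> I" "forest s t (F i)" if "i < k" for i using validF that unfolding fvalid_def by blast+
  have disj: "\<forall>i\<in>{..<k}. \<forall>j\<in>{..<k}. i \<noteq> j \<longrightarrow> F i \<inter> F j = {}" using validF unfolding fvalid_def by blast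
  have finF: "finite (F i)" if "i < k" for i using Fi(1)[OF that] finI finite_subset by blast
  have endsF: "\<forall>e\<in>F i. s e \<in> V \<and> t e \<in> V" if "i < k" for i using Fi(1)[OF that] ends by blast
  have cU: "card (\<Union>i\<in>{..<k}. F i) = ftotal k F" unfolding ftotal_def
    by (rule card_UN_disjoint) (use finF disj in auto)
  have le1: "card (F i) + 1 \<le> card V" if "i < k" for i
    by (rule forest_card_le1[OF finV finF[OF that] endsF[OF that] Fi(2)[OF that] xy(1)])
  have le2: "card (F i0) + 2 \<le> card V"
    by (rule forest_card_le[OF finV finF[OF i0] endsF[OF i0] Fi(2)[OF i0] xy])
  have "(\<Sum>i<k. card (F i) + (if i = i0 then 1 else 0)) \<le> (\<Sum>i<k. card V - 1)"
  proof (rule sum_mono)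
    fix i assume "i \<in> {..<k}"
    thus "card (F i) + (if i = i0 then 1 else 0) \<le> card V - 1" using le1[of i] le2 by auto
  qed
  hence "ftotal k F + 1 \<le> k * (card V - 1)" using i0 by (simp add: sum.distrib ftotal_def)
  hence lt: "card (\<Union>i\<in>{..<k}. F i) < card ?N" using N cU by simp
  have "\<not> ?N \<subseteq> (\<Union>i\<in>{..<k}. F i)"
  proof
    assume "?N \<subseteq> (\<Union>i\<in>{..<k}. F i)"
    moreover have "finite (\<Union>i\<in>{..<k}. F i)" using finF by simp
    ultimately have "card ?N \<le> card (\<Union>i\<in>{..<k}. F i)" by (rule card_mono[rotated])
    thus False using lt by simp
  qed
  then obtain e0 where e0: "e0 \<in> I" "s e0 \<noteq> t e0" "\<forall>i<k. e0 \<notin> F i" by blast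
  have e0E: "e0 \<in> E0" using uncovered_E0[OF F_cls e0(1,3)] .
  define U where "U = {v \<in> V. conn s t E0 (s e0) v}"
  have sU: "s e0 \<in> U" "t e0 \<in> U" using ends e0(1) conn_edge[OF e0E, of s t] unfolding U_def by auto
  have "card {s e0, t e0} = 2" using e0(2) by simp
  moreover have "finite U" unfolding U_def using finV by simp
  ultimately have c2: "2 \<le> card U" using sU card_mono[of U "{s e0, t e0}"] by simp
  have UV: "U \<subseteq> V" unfolding U_def by blast
  have "\<forall>i<k. \<forall>x\<in>U. \<forall>y\<in>U. conn s t {e \<in> F i. s e \<in> U \<and> t e \<in> U} x y"
  proof (intro allI impI ballI)
    fix i x y assume i: "i < k" and x: "x \<in> U" and y: "y \<in> U"
    have a: "conn s t E0 (s e0) x" "conn s t E0 (s e0) y" using x y unfolding U_def by auto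
    have "conn s t E0 x y" by (rule conn_trans[OF conn_sym[OF a(1)] a(2)])
    hence c: "conn s t (F i \<inter> E0) x y" by (rule E0_conn[OF i])
    have H: "s e \<in> U \<longleftrightarrow> t e \<in> U" if "e \<in> F i \<inter> E0" for e
    proof -
      have eE: "e \<in> E0" and eI: "e \<in> I" using that unfolding E0_def by auto
      have ce: "conn s t E0 (s e) (t e)" using eE by (rule conn_edge)
      have se: "s e \<in> V" "t e \<in> V" using ends eI by auto
      have "conn s t E0 (s e0) (s e) \<longleftrightarrow> conn s t E0 (s e0) (t e)"
        using conn_trans[OF _ ce] conn_trans[OF _ conn_sym[OF ce]] by blast
      thus "s e \<in> U \<longleftrightarrow> t e \<in> U" unfolding U_def using se by simp
    qed
    have "conn s t {e \<in> F i \<inter> E0. s e \<in> U \<and> t e \<in> U} x y \<and> y \<in> U"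
      using conn_restrict[of s t "F i \<inter> E0" x y U, OF c x H] .
    hence cc: "conn s t {e \<in> F i \<inter> E0. s e \<in> U \<and> t e \<in> U} x y" by (rule conjunct1)
    have sub: "{e \<in> F i \<inter> E0. s e \<in> U \<and> t e \<in> U} \<subseteq> {e \<in> F i. s e \<in> U \<and> t e \<in> U}" by blast
    show "conn s t {e \<in> F i. s e \<in> U \<and> t e \<in> U} x y" by (rule conn_mono[OF sub cc])
  qed
  thus ?thesis using UV c2 by blast
qed

end

lemma lift:
  assumes "conn (\<phi> \<circ> s) (\<phi> \<circ> t) A a b" "\<forall>e\<in>A. s e \<in> V \<and> t e \<in> V"
    "\<forall>v\<in>V. \<forall>w\<in>V. \<phi> v = \<phi> w \<longrightarrow> conn s t D v w"
  shows "\<forall>x\<in>V. \<forall>y\<in>V. \<phi> x = a \<longrightarrow> \<phi> y = b \<longrightarrow> conn s t (A \<union> D) x y"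
  using assms(1) unfolding conn_def[of "\<phi> \<circ> s"]
proof (induction rule: rtrancl_induct)
  case base
  show ?case
  proof (intro ballI impI)
    fix x y assume "x \<in> V" "y \<in> V" "\<phi> x = a" "\<phi> y = a"
    hence "conn s t D x y" using assms(3) by simp
    thus "conn s t (A \<union> D) x y" by (rule conn_mono[rotated]) blast
  qed
next
  case (step b c)
  show ?case
  proof (intro ballI impI)
    fix x y assume xy: "x \<in> V" "y \<in> V" "\<phi> x = a" "\<phi> y = c"
    have mD: "conn s t D p q \<Longrightarrow> conn s t (A \<union> D) p q" for p q using conn_mono[OF Un_upper2] by metis
    from step(2) show "conn s t (A \<union> D) x y"
    proof (rule conn_step_cases)
      fix e assume e: "e \<in> A" "b = (\<phi> \<circ> s) e" "c = (\<phi> \<circ> t) e"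
      have V: "s e \<in> V" "t e \<in> V" using assms(2) e(1) by auto
      have 1: "conn s t (A \<union> D) x (s e)" using step(3) xy V e(2) by simp
      have 2: "conn s t (A \<union> D) (s e) (t e)" by (rule conn_edge) (use e(1) in blast)
      have 3: "conn s t (A \<union> D) (t e) y" using mD assms(3) V xy e(3) by simp
      show ?thesis using 1 2 3 conn_trans by metis
    next
      fix e assume e: "e \<in> A" "b = (\<phi> \<circ> t) e" "c = (\<phi> \<circ> s) e"
      have V: "s e \<in> V" "t e \<in> V" using assms(2) e(1) by auto
      have 1: "conn s t (A \<union> D) x (t e)" using step(3) xy V e(2) by simp
      have 2: "conn s t (A \<union> D) (t e) (s e)" by (rule conn_edge') (use e(1) in blast)
      have 3: "conn s t (A \<union> D) (s e) y" using mD assms(3) V xy e(3) by simp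
      show ?thesis using 1 2 3 conn_trans by metis
    qed
  qed
qed

theorem packing:
  assumes "finite V" "finite I" "\<forall>e\<in>I. s e \<in> V \<and> t e \<in> V" "partcond V I s t k"
  shows "\<exists>T. (\<forall>i<k. T i \<subseteq> I \<and> (\<forall>x\<in>V. \<forall>y\<in>V. conn s t (T i) x y)) \<and>
             (\<forall>i<k. \<forall>j<k. i \<noteq> j \<longrightarrow> T i \<inter> T j = {})"
  using assms
proof (induction "card V" arbitrary: V I s t rule: less_induct)
  case less
  have v0: "fvalid I s t k (\<lambda>_. {})" unfolding fvalid_def forest_def by simp
  have bnd: "\<forall>G. fvalid I s t k G \<longrightarrow> ftotal k G < k * card I + 1"
  proof (intro allI impI)
    fix G assume "fvalid I s t k G"
    hence "\<forall>i<k. G i \<subseteq> I" unfolding fvalid_def by blast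
    hence "\<forall>i<k. card (G i) \<le> card I" using card_mono[OF less(3)] by simp
    hence "(\<Sum>i<k. card (G i)) \<le> (\<Sum>i<k. card I)" by (intro sum_mono) simp
    thus "ftotal k G < k * card I + 1" unfolding ftotal_def by simp
  qed
  obtain F where F: "fvalid I s t k F" "\<And>G. fvalid I s t k G \<Longrightarrow> ftotal k G \<le> ftotal k F"
    using Lattices_Big.ex_has_greatest_nat[of "fvalid I s t k" "\<lambda>_. {}" "ftotal k", OF v0 bnd] by blast
  interpret maxfam V I s t k F
    by unfold_locales (use less(2,3,4) F in simp_all)
  show ?case
  proof (cases "\<forall>i<k. \<forall>x\<in>V. \<forall>y\<in>V. conn s t (F i) x y")
    case True
    moreover have "\<forall>i<k. F i \<subseteq> I" "\<forall>i<k. \<forall>j<k. i \<noteq> j \<longrightarrow> F i \<inter> F j = {}"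
      using F(1) unfolding fvalid_def by auto
    ultimately show ?thesis by (intro exI[of _ F]) simp
  next
    case False
    then obtain i0 x0 y0 where i0: "i0 < k" "x0 \<in> V" "y0 \<in> V" "\<not> conn s t (F i0) x0 y0" by blast
    obtain U where U: "U \<subseteq> V" "2 \<le> card U"
      "\<forall>i<k. \<forall>x\<in>U. \<forall>y\<in>U. conn s t {e \<in> F i. s e \<in> U \<and> t e \<in> U} x y"
      using find_U[OF less(5) i0] by blast
    have "U \<noteq> {}" using U(2) by auto
    then obtain u0 where u0: "u0 \<in> U" by blast
    define \<phi> where "\<phi> = (\<lambda>v. if v \<in> U then u0 else v)"
    define V' where "V' = \<phi> ` V"
    define I' where "I' = {e \<in> I. \<not> (s e \<in> U \<and> t e \<in> U)}"
    have finU: "finite U" using U(1) less(2) finite_subset by blast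
    have "V' \<subseteq> insert u0 (V - U)" unfolding V'_def \<phi>_def by auto
    hence "card V' \<le> card (insert u0 (V - U))" using less(2) by (intro card_mono) auto
    also have "\<dots> \<le> card (V - U) + 1" by (simp add: card_insert_le_m1)
    also have "card (V - U) = card V - card U" using U(1) finU by (simp add: card_Diff_subset)
    finally have cV': "card V' < card V" using U(2) card_mono[OF less(2) U(1)] by linarith
    have pc': "partcond V' I' (\<phi> \<circ> s) (\<phi> \<circ> t) k"
      unfolding partcond_def
    proof
      fix f :: "'a \<Rightarrow> 'a"
      have "k * (card ((f \<circ> \<phi>) ` V) - 1) \<le> card {e\<in>I. (f \<circ> \<phi>) (s e) \<noteq> (f \<circ> \<phi>) (t e)}"
        using less(5) unfolding partcond_def by blast
      moreover have "(f \<circ> \<phi>) ` V = f ` V'" unfolding V'_def by (simp add: image_comp)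
      moreover have "{e\<in>I. (f \<circ> \<phi>) (s e) \<noteq> (f \<circ> \<phi>) (t e)} = {e\<in>I'. f ((\<phi> \<circ> s) e) \<noteq> f ((\<phi> \<circ> t) e)}"
        unfolding I'_def \<phi>_def by auto
      ultimately show "k * (card (f ` V') - 1) \<le> card {e\<in>I'. f ((\<phi> \<circ> s) e) \<noteq> f ((\<phi> \<circ> t) e)}" by simp
    qed
    have finV': "finite V'" unfolding V'_def using less(2) by simp
    have finI': "finite I'" unfolding I'_def using less(3) by simp
    have ends': "\<forall>e\<in>I'. (\<phi> \<circ> s) e \<in> V' \<and> (\<phi> \<circ> t) e \<in> V'" unfolding I'_def V'_def using less(4) by auto
    obtain T' where T': "\<forall>i<k. T' i \<subseteq> I' \<and> (\<forall>x\<in>V'. \<forall>y\<in>V'. conn (\<phi> \<circ> s) (\<phi> \<circ> t) (T' i) x y)"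
      "\<forall>i<k. \<forall>j<k. i \<noteq> j \<longrightarrow> T' i \<inter> T' j = {}"
      using less(1)[OF cV'[unfolded V'_def] finV'[unfolded V'_def] finI' ends'[unfolded V'_def] pc'[unfolded V'_def]]
      unfolding V'_def by blast
    define D where "D i = {e \<in> F i. s e \<in> U \<and> t e \<in> U}" for i
    define T where "T i = T' i \<union> D i" for i
    have FI: "F i \<subseteq> I" if "i < k" for i using F(1) that unfolding fvalid_def by blast
    have Fdisj: "F i \<inter> F j = {}" if "i < k" "j < k" "i \<noteq> j" for i j
      using F(1) that unfolding fvalid_def by blast
    show ?thesis
    proof (rule exI[of _ T], intro conjI allI impI)
      fix i assume i: "i < k"
      show "T i \<subseteq> I" unfolding T_def D_def using T'(1) i FI[OF i] unfolding I'_def by blast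
    next
      fix i assume i: "i < k"
      have Dc: "\<forall>v\<in>V. \<forall>w\<in>V. \<phi> v = \<phi> w \<longrightarrow> conn s t (D i) v w"
      proof (intro ballI impI)
        fix v w assume vw: "v \<in> V" "w \<in> V" "\<phi> v = \<phi> w"
        show "conn s t (D i) v w"
        proof (cases "v \<in> U")
          case True
          hence "w \<in> U" using vw(3) u0 unfolding \<phi>_def by (auto split: if_splits)
          thus ?thesis using U(3) i True unfolding D_def by blast
        next
          case False
          hence "w \<notin> U" using vw(3) u0 unfolding \<phi>_def by (auto split: if_splits)
          hence "v = w" using vw(3) False unfolding \<phi>_def by simp
          thus ?thesis by simp
        qed
      qed
      have endsT': "\<forall>e\<in>T' i. s e \<in> V \<and> t e \<in> V" using T'(1) i less(4) unfolding I'_def by blast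
      show "\<forall>x\<in>V. \<forall>y\<in>V. conn s t (T i) x y"
      proof (intro ballI)
        fix x y assume xy: "x \<in> V" "y \<in> V"
        have "\<phi> x \<in> V'" "\<phi> y \<in> V'" unfolding V'_def using xy by auto
        hence "conn (\<phi> \<circ> s) (\<phi> \<circ> t) (T' i) (\<phi> x) (\<phi> y)" using T'(1) i by blast
        from lift[OF this endsT' Dc] xy show "conn s t (T i) x y" unfolding T_def by blast
      qed
    next
      fix i j assume ij: "i < k" "j < k" "i \<noteq> j"
      have "T' i \<inter> T' j = {}" using T'(2) ij by blast
      moreover have "T' i \<inter> D j = {}" "D i \<inter> T' j = {}"
        using T'(1) ij unfolding D_def I'_def by blast+
      moreover have "D i \<inter> D j = {}" using Fdisj[OF ij] unfolding D_def by blast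
      ultimately show "T i \<inter> T j = {}" unfolding T_def by blast
    qed
  qed
qed

definition sfst :: "'a set \<Rightarrow> 'a" where "sfst e = (SOME x. x \<in> e)"
definition ssnd :: "'a set \<Rightarrow> 'a" where "ssnd e = (SOME y. y \<in> e \<and> y \<noteq> sfst e)"

lemma two_ends:
  assumes "card e = 2"
  shows "sfst e \<in> e" "ssnd e \<in> e" "sfst e \<noteq> ssnd e" "e = {sfst e, ssnd e}"
proof -
  obtain x y where xy: "e = {x, y}" "x \<noteq> y" using assms by (auto simp: card_2_iff)
  show 1: "sfst e \<in> e" unfolding sfst_def using xy by (metis insertI1 someI)
  have "\<exists>y. y \<in> e \<and> y \<noteq> sfst e" using xy 1 by auto
  thus 2: "ssnd e \<in> e" and 3: "sfst e \<noteq> ssnd e" unfolding ssnd_def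
    by (metis (mono_tags, lifting) someI_ex)+
  show "e = {sfst e, ssnd e}" using 1 2 3 xy by auto
qed

lemma Rel_adj:
  assumes "\<forall>e\<in>A. card e = 2"
  shows "Rel sfst ssnd A = adj A"
proof
  show "Rel sfst ssnd A \<subseteq> adj A"
  proof
    fix p assume "p \<in> Rel sfst ssnd A"
    then obtain e where e: "e \<in> A" "p = (sfst e, ssnd e) \<or> p = (ssnd e, sfst e)"
      unfolding Rel_def by blast
    have "e = {sfst e, ssnd e}" using two_ends(4) assms e(1) by blast
    thus "p \<in> adj A" using e unfolding adj_def by (auto simp: insert_commute)
  qed
next
  show "adj A \<subseteq> Rel sfst ssnd A"
  proof
    fix p assume "p \<in> adj A"
    then obtain u v where p: "p = (u, v)" "{u, v} \<in> A" unfolding adj_def by blast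
    have "{u, v} = {sfst {u, v}, ssnd {u, v}}" using two_ends(4) assms p(2) by blast
    hence "(u, v) = (sfst {u, v}, ssnd {u, v}) \<or> (u, v) = (ssnd {u, v}, sfst {u, v})"
      by (auto simp: doubleton_eq_iff)
    thus "p \<in> Rel sfst ssnd A" using p unfolding Rel_def by blast
  qed
qed

lemma conn_adj:
  assumes "\<forall>e\<in>A. card e = 2"
  shows "conn sfst ssnd A x y \<longleftrightarrow> (x, y) \<in> (adj A)\<^sup>*"
  unfolding conn_def Rel_adj[OF assms] ..

lemma cut_bound:
  fixes V :: "'a set" and E :: "'a set set" and f :: "'a \<Rightarrow> 'a"
  assumes sg: "simple_graph V E" and c: "c \<in> f ` V" and y: "y \<in> V" "f y \<noteq> c"
  shows "edge_connectivity V E \<le> card {e \<in> E. f (sfst e) \<noteq> f (ssnd e) \<and> (f (sfst e) = c \<or> f (ssnd e) = c)}"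
    (is "_ \<le> card ?D")
proof -
  obtain x where x: "x \<in> V" "f x = c" using c by blast
  have c2: "\<forall>e\<in>E. card e = 2" using sg unfolding simple_graph_def by blast
  have inv: "f w = c" if "(u, w) \<in> (adj (E - ?D))\<^sup>*" "f u = c" for u w
    using that
  proof (induction rule: rtrancl_induct)
    case base thus ?case by simp
  next
    case (step w z)
    have "{w, z} \<in> E - ?D" using step(2) unfolding adj_def by simp
    then obtain e where e: "e \<in> E" "e \<notin> ?D" "e = {w, z}" by blast
    have ee: "e = {sfst e, ssnd e}" using two_ends(4) c2 e(1) by blast
    have fw: "f w = c" using step(3,4) by simp
    have wz: "w = sfst e \<or> w = ssnd e" "z = sfst e \<or> z = ssnd e" using e(3) ee by blast+
    have nD: "f (sfst e) = f (ssnd e) \<or> (f (sfst e) \<noteq> c \<and> f (ssnd e) \<noteq> c)" using e(1,2) by blast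
    have "f (sfst e) = c \<or> f (ssnd e) = c" using wz(1) fw by blast
    hence "f (sfst e) = c \<and> f (ssnd e) = c" using nD by argo
    thus ?case using wz(2) by (elim disjE conjE) simp_all
  qed
  have "\<not> connected_graph V (E - ?D)"
  proof
    assume "connected_graph V (E - ?D)"
    hence "(x, y) \<in> (adj (E - ?D))\<^sup>*" using x(1) y(1) unfolding connected_graph_def by blast
    hence "f y = c" using x(2) by (rule inv)
    thus False using y(2) by simp
  qed
  moreover have "?D \<subseteq> E" by blast
  ultimately have "\<exists>S. S \<subseteq> E \<and> card S = card ?D \<and> \<not> connected_graph V (E - S)"
    by (intro exI[of _ ?D]) simp
  thus ?thesis unfolding edge_connectivity_def by (rule Least_le)
qed

lemma partcond_from_ec:
  fixes V :: "'a set" and E :: "'a set set"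
  assumes sg: "simple_graph V E"
  shows "partcond V E sfst ssnd (edge_connectivity V E div 2)"
  unfolding partcond_def
proof
  fix f :: "'a \<Rightarrow> 'a"
  let ?K = "edge_connectivity V E"
  let ?k = "?K div 2"
  let ?r = "card (f ` V)"
  let ?Cr = "{e \<in> E. f (sfst e) \<noteq> f (ssnd e)}"
  have finV: "finite V" using sg unfolding simple_graph_def by blast
  have EP: "E \<subseteq> Pow V" using sg unfolding simple_graph_def by blast
  have finE: "finite E" using finite_subset[OF EP] finV by blast
  have c2: "\<forall>e\<in>E. card e = 2" using sg unfolding simple_graph_def by blast
  have endsV: "sfst e \<in> V" "ssnd e \<in> V" if "e \<in> E" for e
    using two_ends(1,2)[of e] c2 that EP by blast+
  show "?k * (?r - 1) \<le> card ?Cr"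
  proof (cases "?r \<le> 1")
    case True thus ?thesis by simp
  next
    case False
    define D where "D c = {e \<in> E. f (sfst e) \<noteq> f (ssnd e) \<and> (f (sfst e) = c \<or> f (ssnd e) = c)}" for c
    have Dge: "?K \<le> card (D c)" if "c \<in> f ` V" for c
    proof -
      have "\<exists>c'. c' \<in> f ` V \<and> c' \<noteq> c"
      proof (rule ccontr)
        assume "\<not> ?thesis"
        hence "f ` V \<subseteq> {c}" by blast
        hence "?r \<le> 1" using card_mono[of "{c}" "f ` V"] by simp
        thus False using False by simp
      qed
      then obtain y where "y \<in> V" "f y \<noteq> c" by blast
      thus ?thesis unfolding D_def by (rule cut_bound[OF sg that])
    qed
    have fin1: "finite (f ` V)" using finV by simp
    have "?r * ?K \<le> (\<Sum>c\<in>f ` V. card (D c))"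
      using sum_mono[of "f ` V" "\<lambda>_. ?K" "\<lambda>c. card (D c)"] Dge by simp
    also have "\<dots> \<le> (\<Sum>c\<in>f ` V. card {e \<in> ?Cr. f (sfst e) = c} + card {e \<in> ?Cr. f (ssnd e) = c})"
    proof (rule sum_mono)
      fix c assume "c \<in> f ` V"
      have "D c = {e \<in> ?Cr. f (sfst e) = c} \<union> {e \<in> ?Cr. f (ssnd e) = c}" unfolding D_def by blast
      thus "card (D c) \<le> card {e \<in> ?Cr. f (sfst e) = c} + card {e \<in> ?Cr. f (ssnd e) = c}"
        by (simp add: card_Un_le)
    qed
    also have "\<dots> = (\<Sum>c\<in>f ` V. card {e \<in> ?Cr. f (sfst e) = c}) + (\<Sum>c\<in>f ` V. card {e \<in> ?Cr. f (ssnd e) = c})"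
      by (rule sum.distrib)
    also have "(\<Sum>c\<in>f ` V. card {e \<in> ?Cr. f (sfst e) = c}) = card ?Cr"
    proof -
      have eq: "?Cr = (\<Union>c\<in>f ` V. {e \<in> ?Cr. f (sfst e) = c})" using endsV by blast
      have cd: "card (\<Union>c\<in>f ` V. {e \<in> ?Cr. f (sfst e) = c}) = (\<Sum>c\<in>f ` V. card {e \<in> ?Cr. f (sfst e) = c})"
        by (rule card_UN_disjoint) (use fin1 finE in auto)
      show ?thesis by (rule trans[OF cd[symmetric] arg_cong[where f=card, OF eq[symmetric]]])
    qed
    also have "(\<Sum>c\<in>f ` V. card {e \<in> ?Cr. f (ssnd e) = c}) = card ?Cr"
    proof -
      have eq: "?Cr = (\<Union>c\<in>f ` V. {e \<in> ?Cr. f (ssnd e) = c})" using endsV by blast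
      have cd: "card (\<Union>c\<in>f ` V. {e \<in> ?Cr. f (ssnd e) = c}) = (\<Sum>c\<in>f ` V. card {e \<in> ?Cr. f (ssnd e) = c})"
        by (rule card_UN_disjoint) (use fin1 finE in auto)
      show ?thesis by (rule trans[OF cd[symmetric] arg_cong[where f=card, OF eq[symmetric]]])
    qed
    finally have "?r * ?K \<le> 2 * card ?Cr" by simp
    moreover have "2 * ?k \<le> ?K" by simp
    ultimately have "?r * (2 * ?k) \<le> 2 * card ?Cr" by (meson le_trans mult_le_mono2)
    hence "?r * ?k \<le> card ?Cr" by simp
    moreover have "?k * (?r - 1) \<le> ?r * ?k" by (simp add: mult.commute)
    ultimately show ?thesis by linarith
  qed
qed

theorem mainTheorem10:
  fixes V :: "'a set" and E :: "'a set set"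
  assumes "simple_graph V E"
    and "connected_graph V E"
    and "card V \<ge> 2"
  shows "max_code V E \<ge> 2 ^ (edge_connectivity V E div 2)"
proof -
  let ?k = "edge_connectivity V E div 2"
  have finV: "finite V" using assms(1) unfolding simple_graph_def by blast
  have EP: "E \<subseteq> Pow V" using assms(1) unfolding simple_graph_def by blast
  have finE: "finite E" using finite_subset[OF EP] finV by blast
  have c2: "\<forall>e\<in>E. card e = 2" using assms(1) unfolding simple_graph_def by blast
  have endsV: "\<forall>e\<in>E. sfst e \<in> V \<and> ssnd e \<in> V"
    using two_ends(1,2) c2 EP by blast
  obtain T where T: "\<forall>i<?k. T i \<subseteq> E \<and> (\<forall>x\<in>V. \<forall>y\<in>V. conn sfst ssnd (T i) x y)"
    "\<forall>i<?k. \<forall>j<?k. i \<noteq> j \<longrightarrow> T i \<inter> T j = {}"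
    using packing[OF finV finE endsV partcond_from_ec[OF assms(1)]] by blast
  have TE: "T i \<subseteq> E" if "i < ?k" for i using T(1) that by blast
  have Tc: "(x, y) \<in> (adj (T i))\<^sup>*" if "i < ?k" "x \<in> V" "y \<in> V" for i x y
  proof -
    have a: "\<forall>e\<in>T i. card e = 2" using TE[OF that(1)] c2 by blast
    have "conn sfst ssnd (T i) x y" using T(1) that by blast
    thus ?thesis using conn_adj[OF a] by simp
  qed
  obtain x0 y0 where xy0: "x0 \<in> V" "y0 \<in> V" "x0 \<noteq> y0"
  proof -
    have "\<not> card V \<le> Suc 0" using assms(3) by simp
    hence "\<exists>x\<in>V. \<exists>y\<in>V. x \<noteq> y" using card_le_Suc0_iff_eq[OF finV] by blast
    thus ?thesis using that by blast
  qed
  have Tne: "T i \<noteq> {}" if "i < ?k" for i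
  proof
    assume "T i = {}"
    hence "adj (T i) = {}" unfolding adj_def by simp
    moreover have "(x0, y0) \<in> (adj (T i))\<^sup>*" using Tc[OF that xy0(1,2)] .
    ultimately show False using xy0(3) by simp
  qed
  define U where "U S = (\<Union>i\<in>S. T i)" for S
  define C where "C = U ` Pow {..<?k}"
  have notin: "e \<notin> U S" if "S \<subseteq> {..<?k}" "i < ?k" "i \<notin> S" "e \<in> T i" for S i e
  proof
    assume "e \<in> U S"
    then obtain j where j: "j \<in> S" "e \<in> T j" unfolding U_def by blast
    have "i \<noteq> j" using j(1) that(3) by blast
    hence "T i \<inter> T j = {}" using T(2) that(1,2) j(1) by blast
    thus False using that(4) j(2) by blast
  qed
  have sub: "T i \<subseteq> U S" if "i \<in> S" for S i unfolding U_def using that by blast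
  have diff: "\<exists>i<?k. (T i \<subseteq> U S1 - U S2) \<or> (T i \<subseteq> U S2 - U S1)"
    if hS: "S1 \<subseteq> {..<?k}" "S2 \<subseteq> {..<?k}" "S1 \<noteq> S2" for S1 S2
  proof -
    obtain i where "i \<in> S1 \<and> i \<notin> S2 \<or> i \<in> S2 \<and> i \<notin> S1" using hS(3) by blast
    thus ?thesis
    proof
      assume i: "i \<in> S1 \<and> i \<notin> S2"
      hence "i < ?k" using hS(1) by blast
      moreover have "T i \<subseteq> U S1 - U S2" using sub[of i S1] notin[OF hS(2) \<open>i < ?k\<close>] i by blast
      ultimately show ?thesis by blast
    next
      assume i: "i \<in> S2 \<and> i \<notin> S1"
      hence "i < ?k" using hS(2) by blast
      moreover have "T i \<subseteq> U S2 - U S1" using sub[of i S2] notin[OF hS(1) \<open>i < ?k\<close>] i by blast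
      ultimately show ?thesis by blast
    qed
  qed
  have inj: "inj_on U (Pow {..<?k})"
  proof (rule inj_onI)
    fix S1 S2 assume S: "S1 \<in> Pow {..<?k}" "S2 \<in> Pow {..<?k}" "U S1 = U S2"
    show "S1 = S2"
    proof (rule ccontr)
      assume "S1 \<noteq> S2"
      then obtain i where i: "i < ?k" "T i \<subseteq> U S1 - U S2 \<or> T i \<subseteq> U S2 - U S1"
        using diff[of S1 S2] S(1,2) by blast
      hence "T i = {}" using S(3) by blast
      thus False using Tne[OF i(1)] by blast
    qed
  qed
  have cardC: "card C = 2 ^ ?k" unfolding C_def
    using card_image[OF inj] by (simp add: card_Pow)
  have code: "connectivity_code V E C"
    unfolding connectivity_code_def
  proof (intro conjI ballI impI)
    fix F assume "F \<in> C"
    then obtain S where "S \<subseteq> {..<?k}" "F = U S" unfolding C_def by blast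
    thus "F \<subseteq> E" unfolding U_def using TE by blast
  next
    fix F1 F2 assume F: "F1 \<in> C" "F2 \<in> C" "F1 \<noteq> F2"
    then obtain S1 S2 where S: "S1 \<subseteq> {..<?k}" "S2 \<subseteq> {..<?k}" "F1 = U S1" "F2 = U S2"
      unfolding C_def by blast
    hence "S1 \<noteq> S2" using F(3) by blast
    then obtain i where i: "i < ?k" "T i \<subseteq> sym_diff F1 F2"
      using diff[OF S(1,2)] S(3,4) unfolding sym_diff_def by blast
    have m: "(adj (T i))\<^sup>* \<subseteq> (adj (sym_diff F1 F2))\<^sup>*"
      by (rule rtrancl_mono) (use i(2) in \<open>auto simp: adj_def\<close>)
    show "connected_graph V (sym_diff F1 F2)"
      unfolding connected_graph_def
    proof (intro conjI ballI)
      show "V \<noteq> {}" using xy0(1) by blast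
    next
      fix u v assume "u \<in> V" "v \<in> V"
      thus "(u, v) \<in> (adj (sym_diff F1 F2))\<^sup>*" using Tc[OF i(1)] m by blast
    qed
  qed
  have fin: "finite {card C | C. connectivity_code V E C}"
  proof (rule finite_subset)
    show "{card C | C. connectivity_code V E C} \<subseteq> {..card (Pow E)}"
    proof
      fix n assume "n \<in> {card C | C. connectivity_code V E C}"
      then obtain C' where C': "n = card C'" "connectivity_code V E C'" by blast
      have "C' \<subseteq> Pow E" using C'(2) unfolding connectivity_code_def by blast
      hence "card C' \<le> card (Pow E)" using finE by (intro card_mono) auto
      thus "n \<in> {..card (Pow E)}" using C'(1) by simp
    qed
  qed simp
  have "card C \<le> max_code V E" unfolding max_code_def
    by (rule Max_ge[OF fin]) (use code in blast)
  thus ?thesis using cardC by simp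
qed

end
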